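(* Let $n\ge 1$, let $\mathcal{C}$ be the set of maximal flags of $\mathrm{PG}(n,q)$ and fix a point $X$. For $i,j\in[n+1]$ and any maximal flag $c$ of type $i$ with respect to $X$, the number $Q_{ij}$ of maximal flags of type $j$ with respect to $X$ that are opposite to $c$ equals $$Q_{ij}=\begin{cases}0&\text{if } i+j<n+2,\\ (q-1+\delta_{i+j,n+2})\,q^{\frac12(n^2-n)+j-2}&\text{if } i+j\ge n+2.\end{cases}$$
   Context: A maximal flag of $\mathrm{PG}(n,q)$ (projective space of $\mathbb{F}_q^{n+1}$) is $(U_1,\dots,U_n)$ with $U_1\subset\cdots\subset U_n$ subspaces of $\mathbb{F}_q^{n+1}$, $\dim U_i=i$; set $U_0=0$, $U_{n+1}=\mathbb{F}_q^{n+1}$. Two maximal flags $(U_i)$, $(V_i)$ are opposite if $U_i\cap V_{n+1-i}=0$ for all $i\in[n]$. The type of a maximal flag $(U_1,\dots,U_n)$ with respect to a point (1-dimensional subspace) $X$ is the smallest $k\in[n]$ with $X\subseteq U_k$, and $n+1$ if no such $k$ exists. $\delta$ is the Kronecker delta. *)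

theory Defs
  imports "HOL-Analysis.Analysis"
begin

text \<open>The ambient vector space F_q^(n+1) is modelled as 'a^'m with CARD('m) = n+1,
  over a finite field 'a, with componentwise scalar multiplication.\<close>

definition vscale :: "'a::field \<Rightarrow> 'a^'m \<Rightarrow> 'a^'m" where
  "vscale c x = (\<chi> i. c * x $ i)"

definition lsub :: "('a::field^'m) set \<Rightarrow> bool" where
  "lsub U = module.subspace vscale U"

definition ldim :: "('a::field^'m) set \<Rightarrow> nat" where
  "ldim U = vector_space.dim vscale U"

text \<open>A maximal flag (U_1,...,U_n) is a list F of length n with F!(i-1) = U_i.
  flag_sub F i gives U_i, with U_0 = 0 and U_(n+1) = whole space.\<close>

definition flag_sub :: "('a::field^'m) set list \<Rightarrow> nat \<Rightarrow> ('a^'m) set" where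
  "flag_sub F i = (if i = 0 then {0} else if i \<le> length F then F ! (i - 1) else UNIV)"

definition max_flags :: "nat \<Rightarrow> ('a::field^'m) set list set" where
  "max_flags n = {F. length F = n \<and>
     (\<forall>i\<in>{1..n}. lsub (flag_sub F i) \<and> ldim (flag_sub F i) = i) \<and>
     (\<forall>i\<in>{1..<n}. flag_sub F i \<subseteq> flag_sub F (Suc i))}"

definition opposite :: "('a::field^'m) set list \<Rightarrow> ('a^'m) set list \<Rightarrow> bool" where
  "opposite F G = (\<forall>i\<in>{1..length F}.
      flag_sub F i \<inter> flag_sub G (length F + 1 - i) = {0})"

definition flag_type :: "('a::field^'m) set \<Rightarrow> ('a^'m) set list \<Rightarrow> nat" where
  "flag_type X F = (if \<exists>k\<in>{1..length F}. X \<subseteq> flag_sub F k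
                    then (LEAST k. k \<in> {1..length F} \<and> X \<subseteq> flag_sub F k)
                    else length F + 1)"

definition kdelta :: "nat \<Rightarrow> nat \<Rightarrow> nat" where
  "kdelta a b = (if a = b then 1 else 0)"

end

theory Submission
  imports Defs
begin

lemma vscale_eq: "vscale = ((*s) :: 'a::field \<Rightarrow> 'a^'m \<Rightarrow> 'a^'m)"
  by (rule ext)+ (simp add: vscale_def vector_scalar_mult_def)

lemma lsub_eq: "lsub U = vec.subspace U"
  by (simp add: lsub_def vscale_eq)

lemma ldim_eq: "ldim U = vec.dim U"
  by (simp add: ldim_def vscale_eq)

lemma card_span_indep:
  fixes B :: "('a::{field,finite}^'m) set"
  assumes "vec.independent B"
  shows "card (vec.span B) = CARD('a) ^ card B"
proof -
  have "finite B" using assms vec.finiteI_independent by blast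
  then show ?thesis using assms
  proof (induction B rule: finite_induct)
    case empty
    then show ?case by simp
  next
    case (insert x B)
    have indB: "vec.independent B" using insert.prems vec.independent_mono by blast
    have xn: "x \<notin> vec.span B" using insert.prems unfolding vec.independent_insert[of x B] using insert.hyps(2) by simp
    let ?f = "\<lambda>(c::'a, y). c *s x + y"
    have inj: "inj_on ?f (UNIV \<times> vec.span B)"
    proof (rule inj_onI, clarsimp)
      fix c y d z
      assume y: "y \<in> vec.span B" and z: "z \<in> vec.span B" and e: "c *s x + y = d *s x + z"
      have "(c - d) *s x = z - y" using e by (simp add: algebra_simps vec.scale_left_diff_distrib)
      show "c = d \<and> y = z"
      proof (cases "c = d")
        case True then show ?thesis using e by simp
      next
        case False
        have cd: "c - d \<noteq> 0" using False by simp
        have "inverse (c - d) *s ((c - d) *s x) = x"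
          by (simp only: vec.scale_scale left_inverse[OF cd] vec.scale_one)
        then have "x = inverse (c - d) *s (z - y)"
          using \<open>(c - d) *s x = z - y\<close> by (simp only:)
        then have "x \<in> vec.span B" using y z by (simp add: vec.span_diff vec.span_scale)
        then show ?thesis using xn by simp
      qed
    qed
    have img: "?f ` (UNIV \<times> vec.span B) = vec.span (insert x B)"
    proof
      show "?f ` (UNIV \<times> vec.span B) \<subseteq> vec.span (insert x B)"
      proof clarsimp
        fix a b assume "b \<in> vec.span B"
        then show "a *s x + b \<in> vec.span (insert x B)"
          unfolding vec.span_insert by (intro CollectI exI[of _ a]) simp
      qed
      show "vec.span (insert x B) \<subseteq> ?f ` (UNIV \<times> vec.span B)"
      proof
        fix v assume "v \<in> vec.span (insert x B)"
        then obtain k where k: "v - k *s x \<in> vec.span B" by (auto simp: vec.span_insert)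
        then show "v \<in> ?f ` (UNIV \<times> vec.span B)"
          by (intro image_eqI[of _ _ "(k, v - k *s x)"]) auto
      qed
    qed
    have "card (vec.span (insert x B)) = card ((UNIV :: 'a set) \<times> vec.span B)"
      by (rule card_image[OF inj, unfolded img])
    also have "\<dots> = CARD('a) * card (vec.span B)" by (rule card_cartesian_product)
    also have "\<dots> = CARD('a) ^ card (insert x B)" using insert indB by simp
    finally show ?case .
  qed
qed

lemma card_subspace:
  fixes S :: "('a::{field,finite}^'m) set"
  assumes "vec.subspace S"
  shows "card S = CARD('a) ^ vec.dim S"
proof -
  obtain B where "finite B" "B \<subseteq> S" "vec.independent B" "vec.span B = S" "card B = vec.dim S"
    using vec.basis_subspace_exists[OF assms] by blast
  then show ?thesis using card_span_indep by metis
qed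

lemma span_sub_eq: "vec.subspace B \<Longrightarrow> vec.span B = B"
  by simp

lemma count_ext:
  fixes S A B :: "('a::{field,finite}^'m) set"
  assumes "vec.subspace S" "vec.subspace A" "vec.subspace B" "A \<subseteq> S" "B \<subseteq> S"
    "A \<inter> B = {0}" "vec.dim A + vec.dim B + t = vec.dim S"
  shows "card {V. vec.subspace V \<and> B \<subseteq> V \<and> V \<subseteq> S \<and> vec.dim V = vec.dim B + t \<and> V \<inter> A = {0}}
         = CARD('a) ^ (vec.dim A * t)"
  using assms
proof (induction t arbitrary: B)
  case 0
  have "{V. vec.subspace V \<and> B \<subseteq> V \<and> V \<subseteq> S \<and> vec.dim V = vec.dim B + 0 \<and> V \<inter> A = {0}} = {B}"
  proof (rule set_eqI, rule iffI)
    fix V assume V: "V \<in> {V. vec.subspace V \<and> B \<subseteq> V \<and> V \<subseteq> S \<and> vec.dim V = vec.dim B + 0 \<and> V \<inter> A = {0}}"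
    then have "vec.subspace V" "B \<subseteq> V" "vec.dim V \<le> vec.dim B" by auto
    then have "B = V" using vec.subspace_dim_equal[of B V] 0(3) by blast
    then show "V \<in> {B}" by simp
  next
    fix V assume "V \<in> {B}"
    then have VB: "V = B" by simp
    have "V \<inter> A = {0}" unfolding VB using 0(6) by blast
    then show "V \<in> {V. vec.subspace V \<and> B \<subseteq> V \<and> V \<subseteq> S \<and> vec.dim V = vec.dim B + 0 \<and> V \<inter> A = {0}}"
      using VB 0(3,5) by simp
  qed
  then show ?case by simp
next
  case (Suc t)
  define q where "q = CARD('a)"
  have q2: "q \<ge> 2"
  proof -
    have "card {0::'a, 1} \<le> CARD('a)" by (rule card_mono) auto
    then show ?thesis unfolding q_def by simp
  qed
  define VV where "VV = {V. vec.subspace V \<and> B \<subseteq> V \<and> V \<subseteq> S \<and> vec.dim V = vec.dim B + Suc t \<and> V \<inter> A = {0}}"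
  define Z where "Z = {a + b | a b. a \<in> A \<and> b \<in> B}"
  have subZ: "vec.subspace Z" unfolding Z_def
    using vec.subspace_sums[OF Suc.prems(2) Suc.prems(3)] by simp
  have dimZ: "vec.dim Z = vec.dim A + vec.dim B"
    using vec.dim_sums_Int[OF Suc.prems(2) Suc.prems(3)] Suc.prems(6) unfolding Z_def by simp
  have ZS: "Z \<subseteq> S" unfolding Z_def using Suc.prems(1,4,5) vec.subspace_add by blast
  have BZ: "B \<subseteq> Z" unfolding Z_def using Suc.prems(2) vec.subspace_0 by force
  define D where "D = S - Z"
  have cardD: "card D = q ^ vec.dim S - q ^ (vec.dim A + vec.dim B)"
  proof -
    have "card D = card S - card Z" unfolding D_def by (rule card_Diff_subset) (use ZS in auto)
    then show ?thesis unfolding q_def using card_subspace[OF subZ] card_subspace[OF Suc.prems(1)] dimZ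
      by simp
  qed
  have key: "{V \<in> VV. x \<in> V} = {V. vec.subspace V \<and> vec.span (insert x B) \<subseteq> V \<and> V \<subseteq> S \<and>
       vec.dim V = vec.dim (vec.span (insert x B)) + t \<and> V \<inter> A = {0}}
     \<and> card {V \<in> VV. x \<in> V} = q ^ (vec.dim A * t)" if xD: "x \<in> D" for x
  proof -
    let ?Bx = "vec.span (insert x B)"
    have xS: "x \<in> S" and xZ: "x \<notin> Z" using xD unfolding D_def by auto
    have spB: "vec.span B = B" using Suc.prems(3) by simp
    have xB: "x \<notin> vec.span B" using xZ BZ unfolding spB by auto
    have dimBx: "vec.dim ?Bx = vec.dim B + 1"
      using xB by (simp add: vec.dim_insert)
    have BxS: "?Bx \<subseteq> S" using xS Suc.prems(1,5) vec.span_minimal by blast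
    have ABx: "A \<inter> ?Bx = {0}"
    proof -
      have "y = 0" if yA: "y \<in> A" and yB: "y \<in> ?Bx" for y
      proof -
        obtain k where k: "y - k *s x \<in> B" using yB unfolding vec.span_insert spB by blast
        show "y = 0"
        proof (cases "k = 0")
          case True
          then show ?thesis using k yA Suc.prems(6) by auto
        next
          case False
          have "x = inverse k *s y + (- inverse k) *s (y - k *s x)"
            using False by (simp add: algebra_simps vec.scale_right_diff_distrib)
          moreover have "inverse k *s y \<in> A" using yA Suc.prems(2) vec.subspace_scale by blast
          moreover have "(- inverse k) *s (y - k *s x) \<in> B" using k Suc.prems(3) vec.subspace_scale by blast
          ultimately have "x \<in> Z" unfolding Z_def by blast
          then show ?thesis using xZ by simp
        qed
      qed
      moreover have "0 \<in> A \<inter> ?Bx" using Suc.prems(2) vec.subspace_0 vec.span_zero by blast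
      ultimately show ?thesis by blast
    qed
    have eq: "{V \<in> VV. x \<in> V} = {V. vec.subspace V \<and> ?Bx \<subseteq> V \<and> V \<subseteq> S \<and>
       vec.dim V = vec.dim ?Bx + t \<and> V \<inter> A = {0}}"
    proof (rule set_eqI, rule iffI)
      fix V assume "V \<in> {V \<in> VV. x \<in> V}"
      then show "V \<in> {V. vec.subspace V \<and> ?Bx \<subseteq> V \<and> V \<subseteq> S \<and>
       vec.dim V = vec.dim ?Bx + t \<and> V \<inter> A = {0}}"
        unfolding VV_def using dimBx vec.span_minimal[of "insert x B" V] by auto
    next
      fix V assume V: "V \<in> {V. vec.subspace V \<and> ?Bx \<subseteq> V \<and> V \<subseteq> S \<and>
       vec.dim V = vec.dim ?Bx + t \<and> V \<inter> A = {0}}"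
      have "insert x B \<subseteq> ?Bx" by (rule vec.span_superset)
      then show "V \<in> {V \<in> VV. x \<in> V}" using V dimBx unfolding VV_def by auto
    qed
    have "card {V \<in> VV. x \<in> V} = q ^ (vec.dim A * t)"
      unfolding eq q_def
      by (rule Suc.IH) (use Suc.prems BxS ABx dimBx in auto)
    with eq show ?thesis by blast
  qed
  have finVV: "finite VV" by simp
  have "(\<Sum>V\<in>VV. card {x \<in> D. x \<in> V}) = (\<Sum>x\<in>D. card {V \<in> VV. x \<in> V})"
  proof -
    have "(\<Sum>V\<in>VV. card {x \<in> D. x \<in> V}) = (\<Sum>V\<in>VV. \<Sum>x\<in>D. if x \<in> V then 1 else 0)"
      by (simp add: sum.inter_filter[symmetric])
    also have "\<dots> = (\<Sum>x\<in>D. \<Sum>V\<in>VV. if x \<in> V then 1 else 0)" by (rule sum.swap)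
    also have "\<dots> = (\<Sum>x\<in>D. card {V \<in> VV. x \<in> V})"
      using finVV by (simp add: sum.inter_filter[symmetric])
    finally show ?thesis .
  qed
  also have "\<dots> = (\<Sum>x\<in>D. q ^ (vec.dim A * t))"
  proof (rule sum.cong)
    fix x assume "x \<in> D" then show "card {V \<in> VV. x \<in> V} = q ^ (vec.dim A * t)" using key by blast
  qed simp
  also have "\<dots> = card D * q ^ (vec.dim A * t)" by simp
  finally have dc: "(\<Sum>V\<in>VV. card {x \<in> D. x \<in> V}) = card D * q ^ (vec.dim A * t)" .
  have cV: "card {x \<in> D. x \<in> V} = q ^ (vec.dim B + Suc t) - q ^ vec.dim B" if "V \<in> VV" for V
  proof -
    have V: "vec.subspace V" "B \<subseteq> V" "V \<subseteq> S" "vec.dim V = vec.dim B + Suc t" "V \<inter> A = {0}"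
      using that unfolding VV_def by auto
    have "{x \<in> D. x \<in> V} = V - B"
    proof (rule set_eqI, rule iffI)
      fix x assume "x \<in> {x \<in> D. x \<in> V}" then show "x \<in> V - B" using BZ unfolding D_def by auto
    next
      fix x assume x: "x \<in> V - B"
      have "x \<notin> Z"
      proof
        assume "x \<in> Z"
        then obtain a b where ab: "a \<in> A" "b \<in> B" "x = a + b" unfolding Z_def by blast
        then have "a = x - b" by simp
        then have "a \<in> V" using x ab V(1,2) vec.subspace_diff by blast
        then have "a = 0" using V(5) ab by blast
        then show False using ab x by simp
      qed
      then show "x \<in> {x \<in> D. x \<in> V}" using x V(3) unfolding D_def by auto
    qed
    moreover have "card (V - B) = card V - card B" by (rule card_Diff_subset) (use V(2) in auto)
    ultimately show ?thesis
      using card_subspace[OF V(1)] card_subspace[OF Suc.prems(3)] V(4) unfolding q_def by simp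
  qed
  have "card VV * (q ^ (vec.dim B + Suc t) - q ^ vec.dim B) = card D * q ^ (vec.dim A * t)"
    using dc cV by simp
  also have "\<dots> = q ^ vec.dim A * (q ^ (vec.dim B + Suc t) - q ^ vec.dim B) * q ^ (vec.dim A * t)"
  proof -
    have sS: "vec.dim S = vec.dim A + (vec.dim B + Suc t)" using Suc.prems(7) by simp
    have "card D = q ^ vec.dim A * q ^ (vec.dim B + Suc t) - q ^ vec.dim A * q ^ vec.dim B"
      unfolding cardD sS power_add[symmetric] by simp
    also have "\<dots> = q ^ vec.dim A * (q ^ (vec.dim B + Suc t) - q ^ vec.dim B)"
      by (simp add: diff_mult_distrib2)
    finally show ?thesis by simp
  qed
  finally have "card VV * (q ^ (vec.dim B + Suc t) - q ^ vec.dim B) =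
     q ^ (vec.dim A * Suc t) * (q ^ (vec.dim B + Suc t) - q ^ vec.dim B)"
    by (simp add: power_add algebra_simps)
  moreover have "q ^ vec.dim B < q ^ (vec.dim B + Suc t)"
    using q2 by (intro power_strict_increasing) auto
  ultimately have "card VV = q ^ (vec.dim A * Suc t)" by simp
  then show ?case unfolding VV_def q_def .
qed

lemma dim_UNIV_vec: "vec.dim (UNIV :: ('a::field^'m) set) = CARD('m)"
  by (simp add: card_cart_basis)

lemma fsub_props:
  fixes d :: "('a::field^'m) set list"
  assumes "d \<in> max_flags n" "CARD('m) = n + 1" "m \<le> n + 1"
  shows "vec.subspace (flag_sub d m) \<and> vec.dim (flag_sub d m) = m"
proof -
  have len: "length d = n" using assms(1) by (simp add: max_flags_def)
  consider "m = 0" | "m \<in> {1..n}" | "m = n + 1" using assms(3) by fastforce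
  then show ?thesis
  proof cases
    case 1 then show ?thesis by (simp add: flag_sub_def vec.subspace_0)
  next
    case 2 then show ?thesis using assms(1) by (auto simp: max_flags_def lsub_eq ldim_eq)
  next
    case 3 then show ?thesis using len assms(2) dim_UNIV_vec[where 'a='a and 'm='m]
      by (simp add: flag_sub_def vec.subspace_UNIV)
  qed
qed

lemma fsub_mono:
  fixes d :: "('a::field^'m) set list"
  assumes "d \<in> max_flags n" "a \<le> b" "b \<le> n + 1"
  shows "flag_sub d a \<subseteq> flag_sub d b"
  using assms(2,3)
proof (induction b)
  case 0 then show ?case by simp
next
  case (Suc b)
  have len: "length d = n" using assms(1) by (simp add: max_flags_def)
  show ?case
  proof (cases "a = Suc b")
    case True then show ?thesis by simp
  next
    case False
    then have ab: "flag_sub d a \<subseteq> flag_sub d b" using Suc by simp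
    have "flag_sub d b \<subseteq> flag_sub d (Suc b)"
    proof -
      consider "b = 0" | "b \<in> {1..<n}" | "b = n" using Suc.prems by fastforce
      then show ?thesis
      proof cases
        case 1
        have "0 \<in> flag_sub d 1"
        proof (cases "n = 0")
          case True then show ?thesis using len by (simp add: flag_sub_def)
        next
          case False
          then have "lsub (flag_sub d 1)" using assms(1) by (simp add: max_flags_def)
          then show ?thesis by (simp add: lsub_eq vec.subspace_0)
        qed
        then show ?thesis using 1 by (simp add: flag_sub_def)
      next
        case 2 then show ?thesis using assms(1) by (simp add: max_flags_def)
      next
        case 3 then show ?thesis using len by (simp add: flag_sub_def)
      qed
    qed
    with ab show ?thesis by blast
  qed
qed

lemma flag_type_iff:
  fixes d :: "('a::field^'m) set list"
  assumes "d \<in> max_flags n" "\<not> X \<subseteq> {0}" "j \<in> {1..n+1}"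
  shows "flag_type X d = j \<longleftrightarrow> X \<subseteq> flag_sub d j \<and> \<not> X \<subseteq> flag_sub d (j - 1)"
proof -
  have len: "length d = n" using assms(1) by (simp add: max_flags_def)
  let ?P = "\<lambda>k. X \<subseteq> flag_sub d k"
  have mono: "?P a \<Longrightarrow> a \<le> b \<Longrightarrow> b \<le> n + 1 \<Longrightarrow> ?P b" for a b
    using fsub_mono[OF assms(1)] by blast
  define t where "t = flag_type X d"
  have t: "t \<in> {1..n+1} \<and> ?P t \<and> \<not> ?P (t - 1)"
  proof (cases "\<exists>k\<in>{1..n}. ?P k")
    case True
    then have teq: "t = (LEAST k. k \<in> {1..n} \<and> ?P k)" unfolding t_def flag_type_def len by simp
    obtain k where k: "k \<in> {1..n}" "?P k" using True by blast
    have t1: "t \<in> {1..n} \<and> ?P t" unfolding teq by (rule LeastI2[of _ k]) (use k in auto)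
    have t2: "\<not> ?P (t - 1)"
    proof
      assume h: "?P (t - 1)"
      show False
      proof (cases "t = 1")
        case True then show ?thesis using h assms(2) by (simp add: flag_sub_def)
      next
        case False
        then have "t - 1 \<in> {1..n}" using t1 by auto
        then have "t \<le> t - 1" unfolding teq using h teq by (metis (mono_tags, lifting) Least_le)
        then show ?thesis using t1 by auto
      qed
    qed
    show ?thesis using t1 t2 by auto
  next
    case False
    then have teq: "t = n + 1" unfolding t_def flag_type_def len by simp
    have "?P t" unfolding teq using len by (simp add: flag_sub_def)
    moreover have "\<not> ?P (t - 1)"
    proof (cases "n = 0")
      case True then show ?thesis using teq assms(2) by (simp add: flag_sub_def)
    next
      case False then show ?thesis using \<open>\<not> (\<exists>k\<in>{1..n}. ?P k)\<close> teq by auto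
    qed
    ultimately show ?thesis using teq by auto
  qed
  show ?thesis
  proof
    assume "flag_type X d = j" then show "?P j \<and> \<not> ?P (j - 1)" using t t_def by simp
  next
    assume j: "?P j \<and> \<not> ?P (j - 1)"
    have "\<not> j < t"
    proof
      assume "j < t" then have "j \<le> t - 1" "t - 1 \<le> n + 1" using t by auto
      then have "?P (t - 1)" using j mono[of j "t - 1"] by blast
      then show False using t by blast
    qed
    moreover have "\<not> t < j"
    proof
      assume "t < j" then have "t \<le> j - 1" "j - 1 \<le> n + 1" using assms(3) by auto
      then have "?P (j - 1)" using t mono[of t "j - 1"] by blast
      then show False using j by blast
    qed
    ultimately show "flag_type X d = j" using t_def by simp
  qed
qed

lemma dim_le_UNIV: "vec.dim (S :: ('a::field^'m) set) \<le> CARD('m)"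
  using vec.dim_subset_UNIV[of S] by (simp add: vec.dimension_def card_cart_basis)

lemma point_dim:
  fixes c :: "('a::field^'m) set list"
  assumes c: "c \<in> max_flags n" and cm: "CARD('m) = n + 1" and k: "k \<le> n"
    and V: "vec.subspace V" "vec.dim V = k + 1" "V \<inter> flag_sub c (n - k) = {0}"
  shows "vec.subspace (V \<inter> flag_sub c (n + 1 - k)) \<and> vec.dim (V \<inter> flag_sub c (n + 1 - k)) = 1"
proof -
  let ?U = "flag_sub c (n + 1 - k)" and ?U' = "flag_sub c (n - k)"
  have U: "vec.subspace ?U" "vec.dim ?U = n + 1 - k" using fsub_props[OF c cm] by auto
  have U': "vec.subspace ?U'" "vec.dim ?U' = n - k" using fsub_props[OF c cm] by auto
  have UU: "?U' \<subseteq> ?U" using fsub_mono[OF c] by auto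
  define P where "P = V \<inter> ?U"
  have P: "vec.subspace P" unfolding P_def using V(1) U(1) vec.subspace_inter by blast
  have s1: "vec.dim {x + y |x y. x \<in> V \<and> y \<in> ?U} + vec.dim P = (k + 1) + (n + 1 - k)"
    using vec.dim_sums_Int[OF V(1) U(1)] V(2) U(2) unfolding P_def by simp
  have "vec.dim {x + y |x y. x \<in> V \<and> y \<in> ?U} \<le> n + 1"
    using dim_le_UNIV[of "{x + y |x y. x \<in> V \<and> y \<in> ?U}"] cm by simp
  then have lo: "vec.dim P \<ge> 1" using s1 k by linarith
  have PU': "P \<inter> ?U' \<subseteq> {0}" using V(3) unfolding P_def by blast
  have s2: "vec.dim {x + y |x y. x \<in> P \<and> y \<in> ?U'} + vec.dim (P \<inter> ?U') = vec.dim P + (n - k)"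
    using vec.dim_sums_Int[OF P U'(1)] U'(2) by simp
  have "{x + y |x y. x \<in> P \<and> y \<in> ?U'} \<subseteq> ?U"
  proof clarify
    fix x y assume "x \<in> P" "y \<in> ?U'"
    then have "x \<in> ?U" "y \<in> ?U" using UU unfolding P_def by auto
    then show "x + y \<in> ?U" using U(1) vec.subspace_add by blast
  qed
  then have "vec.dim {x + y |x y. x \<in> P \<and> y \<in> ?U'} \<le> n + 1 - k"
    using vec.dim_subset[of "{x + y |x y. x \<in> P \<and> y \<in> ?U'}" ?U] U(2) by simp
  moreover have "vec.dim (P \<inter> ?U') = 0" using PU' by simp
  ultimately have "vec.dim P \<le> 1" using s2 k by linarith
  with lo P show ?thesis unfolding P_def by simp
qed

lemma step_count1:
  fixes c :: "('a::{field,finite}^'m) set list"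
  assumes c: "c \<in> max_flags n" and cm: "CARD('m) = n + 1" and k: "1 \<le> k" "k \<le> n"
    and V: "vec.subspace V" "vec.dim V = k + 1" "V \<inter> flag_sub c (n - k) = {0}"
  shows "card {H. vec.subspace H \<and> vec.dim H = k \<and> H \<subseteq> V \<and> H \<inter> flag_sub c (n + 1 - k) = {0}}
           = CARD('a) ^ k"
proof -
  let ?U = "flag_sub c (n + 1 - k)"
  define P where "P = V \<inter> ?U"
  have P: "vec.subspace P" "vec.dim P = 1" using point_dim[OF c cm k(2) V] unfolding P_def by auto
  have PV: "P \<subseteq> V" unfolding P_def by auto
  have HP: "H \<subseteq> V \<Longrightarrow> H \<inter> ?U = H \<inter> P" for H unfolding P_def by blast
  have d0: "vec.dim {0::'a^'m} = 0" by simp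
  have eq1: "{H. vec.subspace H \<and> vec.dim H = k \<and> H \<subseteq> V \<and> H \<inter> ?U = {0}} =
    {H. vec.subspace H \<and> {0} \<subseteq> H \<and> H \<subseteq> V \<and> vec.dim H = k \<and> H \<inter> P = {0}}"
  proof (rule Collect_cong)
    fix H
    show "(vec.subspace H \<and> vec.dim H = k \<and> H \<subseteq> V \<and> H \<inter> ?U = {0}) =
      (vec.subspace H \<and> {0} \<subseteq> H \<and> H \<subseteq> V \<and> vec.dim H = k \<and> H \<inter> P = {0})"
    proof (cases "H \<subseteq> V")
      case True
      then have "H \<inter> ?U = H \<inter> P" by (rule HP)
      then show ?thesis using vec.subspace_0[of H] by auto
    qed simp
  qed
  have "card {H. vec.subspace H \<and> {0} \<subseteq> H \<and> H \<subseteq> V \<and> vec.dim H = vec.dim {0::'a^'m} + k \<and> H \<inter> P = {0}}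
      = CARD('a) ^ (vec.dim P * k)"
  proof (rule count_ext[OF V(1) P(1) vec.subspace_single_0 PV])
    show "{0} \<subseteq> V" using V(1) vec.subspace_0 by blast
    show "P \<inter> {0} = {0}" using P(1) vec.subspace_0 by blast
    show "vec.dim P + vec.dim {0::'a^'m} + k = vec.dim V" using P(2) V(2) d0 by simp
  qed
  then show "card {H. vec.subspace H \<and> vec.dim H = k \<and> H \<subseteq> V \<and> H \<inter> ?U = {0}} = CARD('a) ^ k"
    unfolding eq1 d0 add_0 using P by simp
qed

lemma step_count2:
  fixes c :: "('a::{field,finite}^'m) set list"
  assumes c: "c \<in> max_flags n" and cm: "CARD('m) = n + 1" and k: "1 \<le> k" "k \<le> n"
    and V: "vec.subspace V" "vec.dim V = k + 1" "V \<inter> flag_sub c (n - k) = {0}"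
    and X: "vec.subspace X" "vec.dim X = 1" "X \<subseteq> V"
  shows "card {H. (vec.subspace H \<and> vec.dim H = k \<and> H \<subseteq> V \<and> H \<inter> flag_sub c (n + 1 - k) = {0}) \<and> X \<subseteq> H}
           = (if X \<subseteq> flag_sub c (n + 1 - k) then 0 else CARD('a) ^ (k - 1))"
proof -
  let ?U = "flag_sub c (n + 1 - k)"
  define P where "P = V \<inter> ?U"
  have P: "vec.subspace P" "vec.dim P = 1" using point_dim[OF c cm k(2) V] unfolding P_def by auto
  have PV: "P \<subseteq> V" unfolding P_def by auto
  have HP: "H \<subseteq> V \<Longrightarrow> H \<inter> ?U = H \<inter> P" for H unfolding P_def by blast
  show "card {H. (vec.subspace H \<and> vec.dim H = k \<and> H \<subseteq> V \<and> H \<inter> ?U = {0}) \<and> X \<subseteq> H}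
           = (if X \<subseteq> ?U then 0 else CARD('a) ^ (k - 1))"
  proof (cases "X \<subseteq> ?U")
    case True
    have "{H. (vec.subspace H \<and> vec.dim H = k \<and> H \<subseteq> V \<and> H \<inter> ?U = {0}) \<and> X \<subseteq> H} = {}"
    proof (rule equals0I)
      fix H assume "H \<in> {H. (vec.subspace H \<and> vec.dim H = k \<and> H \<subseteq> V \<and> H \<inter> ?U = {0}) \<and> X \<subseteq> H}"
      then have "H \<inter> ?U = {0}" "X \<subseteq> H" by simp_all
      then have "X \<subseteq> {0}" using True by blast
      then have "vec.dim X = 0" by simp
      then show False using X(2) by simp
    qed
    then show ?thesis using True by simp
  next
    case False
    have XP: "X \<inter> P = {0}"
    proof -
      have sXP: "vec.subspace (X \<inter> P)" using X(1) P(1) vec.subspace_inter by blast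
      have "vec.dim (X \<inter> P) \<le> vec.dim X" by (rule vec.dim_subset) blast
      then have "vec.dim (X \<inter> P) \<le> 1" using X(2) by simp
      moreover have "vec.dim (X \<inter> P) \<noteq> 1"
      proof
        assume "vec.dim (X \<inter> P) = 1"
        then have "vec.dim X \<le> vec.dim (X \<inter> P)" using X(2) by simp
        then have "X \<inter> P = X" by (rule vec.subspace_dim_equal[OF sXP X(1) Int_lower1])
        then have "X \<subseteq> P" by (rule equalityD2[THEN subset_trans]) (rule Int_lower2)
        then have "X \<subseteq> ?U" unfolding P_def by (rule subset_trans) (rule Int_lower2)
        then show False using False by (rule notE[rotated])
      qed
      ultimately have "vec.dim (X \<inter> P) = 0" by linarith
      then have "X \<inter> P \<subseteq> {0}" by (rule vec.dim_eq_0[THEN iffD1])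
      then show ?thesis using vec.subspace_0[OF X(1)] vec.subspace_0[OF P(1)] by blast
    qed
    have eq2: "{H. (vec.subspace H \<and> vec.dim H = k \<and> H \<subseteq> V \<and> H \<inter> ?U = {0}) \<and> X \<subseteq> H} =
      {H. vec.subspace H \<and> X \<subseteq> H \<and> H \<subseteq> V \<and> vec.dim H = vec.dim X + (k - 1) \<and> H \<inter> P = {0}}"
    proof (rule Collect_cong)
      fix H
      have kk: "vec.dim X + (k - 1) = k" using X(2) k by simp
      show "((vec.subspace H \<and> vec.dim H = k \<and> H \<subseteq> V \<and> H \<inter> ?U = {0}) \<and> X \<subseteq> H) =
        (vec.subspace H \<and> X \<subseteq> H \<and> H \<subseteq> V \<and> vec.dim H = vec.dim X + (k - 1) \<and> H \<inter> P = {0})"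
        unfolding kk
      proof (cases "H \<subseteq> V")
        case True
        then have hu: "H \<inter> ?U = H \<inter> P" by (rule HP)
        show "((vec.subspace H \<and> vec.dim H = k \<and> H \<subseteq> V \<and> H \<inter> ?U = {0}) \<and> X \<subseteq> H) =
        (vec.subspace H \<and> X \<subseteq> H \<and> H \<subseteq> V \<and> vec.dim H = k \<and> H \<inter> P = {0})" unfolding hu by argo
      qed simp
    qed
    have "card {H. vec.subspace H \<and> X \<subseteq> H \<and> H \<subseteq> V \<and> vec.dim H = vec.dim X + (k - 1) \<and> H \<inter> P = {0}}
      = CARD('a) ^ (vec.dim P * (k - 1))"
    proof (rule count_ext[OF V(1) P(1) X(1) PV X(3)])
      show "P \<inter> X = {0}" using XP by blast
      show "vec.dim P + vec.dim X + (k - 1) = vec.dim V" using P(2) V(2) X(2) k by simp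
    qed
    then show ?thesis unfolding eq2 using P(2) False by simp
  qed
qed

definition vs :: "'b set list \<Rightarrow> nat \<Rightarrow> 'b set" where
  "vs ys p = (if p < length ys then ys ! p else UNIV)"

definition OPP :: "nat \<Rightarrow> ('a::field^'m) set list \<Rightarrow> (nat \<Rightarrow> ('a^'m) set \<Rightarrow> bool) \<Rightarrow> nat
    \<Rightarrow> ('a^'m) set list set" where
  "OPP n c Q k = {ys. length ys = n + 1 - k \<and> (\<forall>p<length ys. vec.subspace (ys!p) \<and>
      vec.dim (ys!p) = k + p \<and> ys!p \<subseteq> vs ys (Suc p) \<and>
      ys!p \<inter> flag_sub c (n + 1 - (k + p)) = {0} \<and> Q (k + p) (ys!p))}"

definition HS :: "nat \<Rightarrow> ('a::field^'m) set list \<Rightarrow> nat \<Rightarrow> ('a^'m) set \<Rightarrow> ('a^'m) set set" where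
  "HS n c k V = {H. vec.subspace H \<and> vec.dim H = k \<and> H \<subseteq> V \<and> H \<inter> flag_sub c (n + 1 - k) = {0}}"

lemma opp_top: "OPP n c Q (n + 1) = {[]}"
  by (auto simp: OPP_def)

lemma opp_rec:
  assumes "1 \<le> k" "k \<le> n"
  shows "OPP n c Q k = (\<lambda>(ys, H). H # ys) ` (SIGMA ys:OPP n c Q (Suc k). {H \<in> HS n c k (vs ys 0). Q k H})"
proof (rule set_eqI, rule iffI)
  fix zs assume zs: "zs \<in> OPP n c Q k"
  then have "length zs = n + 1 - k" by (simp add: OPP_def)
  then obtain H ys where zs_eq: "zs = H # ys" using assms by (cases zs) auto
  have lys: "length ys = n + 1 - Suc k" using zs zs_eq assms by (simp add: OPP_def Suc_diff_le)
  have all: "\<forall>p<length zs. vec.subspace (zs!p) \<and>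
      vec.dim (zs!p) = k + p \<and> zs!p \<subseteq> vs zs (Suc p) \<and>
      zs!p \<inter> flag_sub c (n + 1 - (k + p)) = {0} \<and> Q (k + p) (zs!p)"
    using zs by (simp add: OPP_def)
  have "ys \<in> OPP n c Q (Suc k)"
    unfolding OPP_def
  proof (rule CollectI, rule conjI[OF lys], intro allI impI)
    fix p assume p: "p < length ys"
    have "vec.subspace (zs!Suc p) \<and>
      vec.dim (zs!Suc p) = k + Suc p \<and> zs!Suc p \<subseteq> vs zs (Suc (Suc p)) \<and>
      zs!Suc p \<inter> flag_sub c (n + 1 - (k + Suc p)) = {0} \<and> Q (k + Suc p) (zs!Suc p)"
      using all[rule_format, of "Suc p"] p zs_eq by simp
    then show "vec.subspace (ys!p) \<and>
      vec.dim (ys!p) = Suc k + p \<and> ys!p \<subseteq> vs ys (Suc p) \<and>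
      ys!p \<inter> flag_sub c (n + 1 - (Suc k + p)) = {0} \<and> Q (Suc k + p) (ys!p)"
      using zs_eq by (auto simp: vs_def split: if_splits)
  qed
  moreover have "H \<in> {H \<in> HS n c k (vs ys 0). Q k H}"
    using all[rule_format, of 0] zs_eq by (auto simp: HS_def vs_def split: if_splits)
  ultimately have "(ys, H) \<in> (SIGMA ys:OPP n c Q (Suc k). {H \<in> HS n c k (vs ys 0). Q k H})"
    by (rule SigmaI)
  then show "zs \<in> (\<lambda>(ys, H). H # ys) ` (SIGMA ys:OPP n c Q (Suc k). {H \<in> HS n c k (vs ys 0). Q k H})"
    by (rule image_eqI[rotated]) (simp add: zs_eq)
next
  fix zs assume "zs \<in> (\<lambda>(ys, H). H # ys) ` (SIGMA ys:OPP n c Q (Suc k). {H \<in> HS n c k (vs ys 0). Q k H})"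
  then obtain ys H where zs_eq: "zs = H # ys" and ys: "ys \<in> OPP n c Q (Suc k)"
    and H: "H \<in> HS n c k (vs ys 0)" "Q k H" by auto
  have lys: "length ys = n + 1 - Suc k" using ys by (simp add: OPP_def)
  have all: "\<forall>p<length ys. vec.subspace (ys!p) \<and>
      vec.dim (ys!p) = Suc k + p \<and> ys!p \<subseteq> vs ys (Suc p) \<and>
      ys!p \<inter> flag_sub c (n + 1 - (Suc k + p)) = {0} \<and> Q (Suc k + p) (ys!p)"
    using ys by (simp add: OPP_def)
  show "zs \<in> OPP n c Q k"
    unfolding OPP_def
  proof (rule CollectI, rule conjI)
    show "length zs = n + 1 - k" using lys zs_eq assms by simp
  next
    show "\<forall>p<length zs. vec.subspace (zs!p) \<and>
      vec.dim (zs!p) = k + p \<and> zs!p \<subseteq> vs zs (Suc p) \<and>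
      zs!p \<inter> flag_sub c (n + 1 - (k + p)) = {0} \<and> Q (k + p) (zs!p)"
    proof (intro allI impI)
    fix p assume p: "p < length zs"
    show "vec.subspace (zs!p) \<and>
      vec.dim (zs!p) = k + p \<and> zs!p \<subseteq> vs zs (Suc p) \<and>
      zs!p \<inter> flag_sub c (n + 1 - (k + p)) = {0} \<and> Q (k + p) (zs!p)"
    proof (cases p)
      case 0
      then show ?thesis using H zs_eq by (auto simp: HS_def vs_def split: if_splits)
    next
      case (Suc p')
      then have "p' < length ys" using p zs_eq by simp
      then have "vec.subspace (ys!p') \<and>
      vec.dim (ys!p') = Suc k + p' \<and> ys!p' \<subseteq> vs ys (Suc p') \<and>
      ys!p' \<inter> flag_sub c (n + 1 - (Suc k + p')) = {0} \<and> Q (Suc k + p') (ys!p')" by (rule all[rule_format])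
      then show ?thesis using Suc zs_eq by (auto simp: vs_def split: if_splits)
    qed
    qed
  qed
qed

lemma opp_inv:
  fixes c :: "('a::field^'m) set list"
  assumes "c \<in> max_flags n" "CARD('m) = n + 1" "ys \<in> OPP n c Q (Suc k)" "k \<le> n"
  shows "vec.subspace (vs ys 0) \<and> vec.dim (vs ys 0) = k + 1 \<and> vs ys 0 \<inter> flag_sub c (n - k) = {0}
     \<and> (ys \<noteq> [] \<longrightarrow> Q (Suc k) (vs ys 0))"
proof (cases ys)
  case Nil
  then have "k = n" using assms(3,4) by (simp add: OPP_def)
  then show ?thesis using Nil assms(2) dim_UNIV_vec[where 'a='a and 'm='m]
    by (simp add: vs_def flag_sub_def vec.subspace_UNIV)
next
  case (Cons a list)
  have "vec.subspace (ys!0) \<and> vec.dim (ys!0) = Suc k + 0 \<and> ys!0 \<subseteq> vs ys (Suc 0) \<and>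
      ys!0 \<inter> flag_sub c (n + 1 - (Suc k + 0)) = {0} \<and> Q (Suc k + 0) (ys!0)"
  proof -
    have all: "\<forall>p<length ys. vec.subspace (ys!p) \<and>
      vec.dim (ys!p) = Suc k + p \<and> ys!p \<subseteq> vs ys (Suc p) \<and>
      ys!p \<inter> flag_sub c (n + 1 - (Suc k + p)) = {0} \<and> Q (Suc k + p) (ys!p)"
      using assms(3) unfolding OPP_def mem_Collect_eq by (rule conjunct2)
    have "0 < length ys" using Cons by simp
    then show ?thesis by (rule all[rule_format])
  qed
  then show ?thesis using Cons by (simp add: vs_def)
qed

lemma opp_card:
  fixes c :: "('a::{field,finite}^'m) set list"
  assumes "\<forall>m\<in>{k..n}. \<forall>ys\<in>OPP n c Q (Suc m). card {H \<in> HS n c m (vs ys 0). Q m H} = f m"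
    "1 \<le> k" "k \<le> n + 1"
  shows "finite (OPP n c Q k) \<and> card (OPP n c Q k) = (\<Prod>m\<in>{k..n}. f m)"
  using assms
proof (induction "n + 1 - k" arbitrary: k)
  case 0
  then have "k = n + 1" by simp
  then show ?case using opp_top[of n c Q] by simp
next
  case (Suc x)
  have kn: "k \<le> n" using Suc.hyps by simp
  have IH: "finite (OPP n c Q (Suc k)) \<and> card (OPP n c Q (Suc k)) = (\<Prod>m\<in>{Suc k..n}. f m)"
  proof (rule Suc.hyps(1))
    show "x = n + 1 - Suc k" using Suc.hyps(2) by simp
    show "\<forall>m\<in>{Suc k..n}. \<forall>ys\<in>OPP n c Q (Suc m). card {H \<in> HS n c m (vs ys 0). Q m H} = f m"
      using Suc.prems(1) by simp
    show "1 \<le> Suc k" "Suc k \<le> n + 1" using kn by simp_all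
  qed
  have inj: "inj_on (\<lambda>(ys, H). H # ys) (SIGMA ys:OPP n c Q (Suc k). {H \<in> HS n c k (vs ys 0). Q k H})"
    by (auto simp: inj_on_def)
  have fin: "finite {H \<in> HS n c k (vs ys 0). Q k H}" for ys
    by (rule finite_subset[of _ "UNIV"]) auto
  have "card (OPP n c Q k) = card (SIGMA ys:OPP n c Q (Suc k). {H \<in> HS n c k (vs ys 0). Q k H})"
    unfolding opp_rec[OF Suc.prems(2) kn] using card_image[OF inj] by simp
  also have "\<dots> = (\<Sum>ys\<in>OPP n c Q (Suc k). card {H \<in> HS n c k (vs ys 0). Q k H})"
    using IH fin by (simp add: card_SigmaI)
  also have "\<dots> = (\<Sum>ys\<in>OPP n c Q (Suc k). f k)"
    using Suc.prems(1) kn Suc.prems(2) by (intro sum.cong) auto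
  also have "\<dots> = f k * (\<Prod>m\<in>{Suc k..n}. f m)" using IH by simp
  also have "\<dots> = (\<Prod>m\<in>{k..n}. f m)" using kn by (simp add: prod.atLeast_Suc_atMost)
  finally have "card (OPP n c Q k) = (\<Prod>m\<in>{k..n}. f m)" .
  moreover have "finite (OPP n c Q k)"
    unfolding opp_rec[OF Suc.prems(2) kn]
    by (rule finite_imageI, rule finite_SigmaI) (use IH fin in auto)
  ultimately show ?case by blast
qed

definition Qj :: "('a::field^'m) set \<Rightarrow> nat \<Rightarrow> nat \<Rightarrow> ('a^'m) set \<Rightarrow> bool" where
  "Qj X j m V = (if j \<le> m then X \<subseteq> V else if Suc m = j then \<not> X \<subseteq> V else True)"

lemma fs_nth: "1 \<le> i \<Longrightarrow> i \<le> length d \<Longrightarrow> flag_sub d i = d ! (i - 1)"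
  by (simp add: flag_sub_def)

lemma flags_eq:
  fixes c :: "('a::field^'m) set list"
  assumes c: "c \<in> max_flags n" and cm: "CARD('m) = n + 1" and X: "\<not> X \<subseteq> {0}" and j: "j \<in> {1..n+1}"
  shows "{d \<in> max_flags n. flag_type X d = j \<and> opposite c d} = OPP n c (Qj X j) 1"
proof (rule set_eqI, rule iffI)
  have lc: "length c = n" using c by (simp add: max_flags_def)
  fix d assume "d \<in> {d \<in> max_flags n. flag_type X d = j \<and> opposite c d}"
  then have d: "d \<in> max_flags n" and ty: "flag_type X d = j" and op: "opposite c d" by auto
  have ld: "length d = n" using d by (simp add: max_flags_def)
  have tyi: "X \<subseteq> flag_sub d j" "\<not> X \<subseteq> flag_sub d (j - 1)" using flag_type_iff[OF d X j] ty by auto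
  show "d \<in> OPP n c (Qj X j) 1"
    unfolding OPP_def
  proof (intro CollectI conjI allI impI)
    show "length d = n + 1 - 1" using ld by simp
    fix p assume p: "p < length d"
    have e1: "flag_sub d (Suc p) = d ! p" using fs_nth[of "Suc p" d] p by simp
    have sd: "vec.subspace (d!p) \<and> vec.dim (d!p) = 1 + p"
      using fsub_props[OF d cm, of "Suc p"] p ld e1 by simp
    then show "vec.subspace (d!p)" "vec.dim (d!p) = 1 + p" by auto
    show "d!p \<subseteq> vs d (Suc p)"
    proof (cases "Suc p < length d")
      case True
      have "flag_sub d (Suc p) \<subseteq> flag_sub d (Suc (Suc p))" using fsub_mono[OF d, of "Suc p" "Suc (Suc p)"] True ld by simp
      then show ?thesis using True e1 fs_nth[of "Suc (Suc p)" d] by (simp add: vs_def)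
    qed (simp add: vs_def)
    have "n - p \<in> {1..length c}" using p ld lc by auto
    then have "flag_sub c (n - p) \<inter> flag_sub d (length c + 1 - (n - p)) = {0}"
      using op unfolding opposite_def by blast
    then show "d!p \<inter> flag_sub c (n + 1 - (1 + p)) = {0}" using lc p ld e1 by (simp add: Int_commute Suc_diff_le)
    show "Qj X j (1 + p) (d!p)"
      unfolding Qj_def
    proof (cases "j \<le> 1 + p")
      case True
      then have "flag_sub d j \<subseteq> flag_sub d (Suc p)" using fsub_mono[OF d, of j "Suc p"] p ld by simp
      then show "if j \<le> 1 + p then X \<subseteq> d!p else if Suc (1 + p) = j then \<not> X \<subseteq> d!p else True"
        using True tyi e1 by auto
    next
      case False
      then show "if j \<le> 1 + p then X \<subseteq> d!p else if Suc (1 + p) = j then \<not> X \<subseteq> d!p else True"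
        using tyi e1 by auto
    qed
  qed
next
  have lc: "length c = n" using c by (simp add: max_flags_def)
  fix d assume d: "d \<in> OPP n c (Qj X j) 1"
  have ld: "length d = n" using d by (simp add: OPP_def)
  have all: "\<And>p. p < n \<Longrightarrow> vec.subspace (d!p) \<and>
      vec.dim (d!p) = 1 + p \<and> d!p \<subseteq> vs d (Suc p) \<and>
      d!p \<inter> flag_sub c (n + 1 - (1 + p)) = {0} \<and> Qj X j (1 + p) (d!p)"
    using d ld by (simp add: OPP_def)
  have dm: "d \<in> max_flags n"
    unfolding max_flags_def
  proof (intro CollectI conjI ballI ld)
    fix i assume i: "i \<in> {1..n}"
    then show "lsub (flag_sub d i)" "ldim (flag_sub d i) = i"
      using all[of "i - 1"] fs_nth[of i d] ld by (auto simp: lsub_eq ldim_eq)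
  next
    fix i assume i: "i \<in> {1..<n}"
    then have "i - 1 < n" "Suc (i - 1) < n" "Suc (i - 1) = i" by auto
    then have "d!(i - 1) \<subseteq> d!i" using all[of "i - 1"] by (simp add: vs_def ld)
    then show "flag_sub d i \<subseteq> flag_sub d (Suc i)"
      using fs_nth[of i d] fs_nth[of "Suc i" d] ld i by simp
  qed
  have op: "opposite c d"
    unfolding opposite_def
  proof
    fix i assume i: "i \<in> {1..length c}"
    have "d!(n - i) \<inter> flag_sub c (n + 1 - (1 + (n - i))) = {0}" using all[of "n - i"] i lc by auto
    moreover have "flag_sub d (length c + 1 - i) = d!(n - i)" using fs_nth[of "length c + 1 - i" d] i lc ld
      by (auto simp: Suc_diff_le)
    ultimately show "flag_sub c i \<inter> flag_sub d (length c + 1 - i) = {0}" using i lc by (auto simp: Int_commute)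
  qed
  have t1: "X \<subseteq> flag_sub d j"
  proof (cases "j \<le> n")
    case True
    then show ?thesis using all[of "j - 1"] j fs_nth[of j d] ld by (auto simp: Qj_def)
  next
    case False
    then show ?thesis using j ld by (simp add: flag_sub_def)
  qed
  have t2: "\<not> X \<subseteq> flag_sub d (j - 1)"
  proof (cases "j = 1")
    case True
    then show ?thesis using X by (simp add: flag_sub_def)
  next
    case False
    then have "j - 2 < n" "Suc (1 + (j - 2)) = j" "\<not> j \<le> 1 + (j - 2)" using j by auto
    then show ?thesis using all[of "j - 2"] fs_nth[of "j - 1" d] ld False j
      by (auto simp: Qj_def numeral_2_eq_2)
  qed
  have "flag_type X d = j" using flag_type_iff[OF dm X j] t1 t2 by simp
  then show "d \<in> {d \<in> max_flags n. flag_type X d = j \<and> opposite c d}" using dm op by simp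
qed

lemma sum_Icc_lessThan: "(\<Sum>m\<in>{1..K}. m) = (\<Sum>m<Suc K. (m::nat))"
  by (induction K) simp_all

lemma prod_pow: "(\<Prod>m\<in>{1..K}. (q::nat) ^ m) = q ^ (\<Sum>m\<in>{1..K}. m)"
  by (induction K) (simp_all add: power_add)

lemma prod_g:
  fixes g :: "nat \<Rightarrow> nat" and q :: nat
  assumes j: "1 \<le> j" and N: "j - 1 \<le> N" and hi: "\<And>m. j \<le> m \<Longrightarrow> g m = q ^ (m - 1)"
    and lo: "\<And>m. 1 \<le> m \<Longrightarrow> m + 1 < j \<Longrightarrow> g m = q ^ m"
  shows "(\<Prod>m\<in>{1..N}. g m) = q ^ (\<Sum>m<N. m) * (if j = 1 then 1 else g (j - 1))"
  using N
proof (induction N rule: dec_induct)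
  case base
  show ?case
  proof (cases "j = 1")
    case True then show ?thesis by simp
  next
    case False
    then have jj: "j - 1 = Suc (j - 2)" using j by simp
    have "(\<Prod>m\<in>{1..j-2}. g m) = (\<Prod>m\<in>{1..j-2}. q ^ m)"
      by (rule prod.cong) (use lo in auto)
    also have "\<dots> = q ^ (\<Sum>m<j - 1. m)" unfolding prod_pow sum_Icc_lessThan jj by simp
    finally have "(\<Prod>m\<in>{1..j-2}. g m) = q ^ (\<Sum>m<j - 1. m)" .
    then show ?thesis unfolding jj using False by simp
  qed
next
  case (step N)
  have gS: "g (Suc N) = q ^ N" using hi[of "Suc N"] step.hyps j by simp
  have "(\<Prod>m\<in>{1..Suc N}. g m) = (\<Prod>m\<in>{1..N}. g m) * g (Suc N)" by simp
  also have "\<dots> = q ^ (\<Sum>m<N. m) * (if j = 1 then 1 else g (j - 1)) * q ^ N" using step.IH gS by simp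
  also have "\<dots> = q ^ (\<Sum>m<Suc N. m) * (if j = 1 then 1 else g (j - 1))" by (simp add: power_add)
  finally show ?case .
qed

lemma sum_lessThan_tri: "(\<Sum>m<n. (m::nat)) = (n^2 - n) div 2"
proof (cases n)
  case 0 then show ?thesis by simp
next
  case (Suc k)
  have "(\<Sum>m<n. m) = (\<Sum>m\<in>{0..k}. m)" unfolding Suc by (simp add: atLeast0AtMost lessThan_Suc_atMost)
  also have "\<dots> = k * Suc k div 2" using gauss_sum_nat[of k] by simp
  also have "k * Suc k = n^2 - n" unfolding Suc by (simp add: power2_eq_square)
  finally show ?thesis .
qed


lemma prod_arith:
  fixes q n i j :: nat
  assumes q: "q \<ge> 1" and i: "i \<in> {1..n+1}" and j: "j \<in> {1..n+1}"
  shows "real (\<Prod>m\<in>{1..n}. (if j \<le> m then (if i \<le> n + 1 - m then 0 else q ^ (m - 1))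
            else if Suc m = j then q ^ m - (if i \<le> n + 1 - m then 0 else q ^ (m - 1)) else q ^ m))
     = (if i + j < n + 2 then 0
        else (real q - 1 + real (kdelta (i + j) (n + 2))) * real q powi (int ((n^2 - n) div 2) + int j - 2))"
    (is "real (\<Prod>m\<in>{1..n}. ?f m) = ?R")
proof (cases "i + j < n + 2")
  case True
  then have "j \<in> {1..n}" "?f j = 0" using i j by auto
  then have ex: "\<exists>a\<in>{1..n}. ?f a = 0" by (intro bexI[of _ j])
  have "(\<Prod>m\<in>{1..n}. ?f m) = 0" by (rule prod_zero[OF finite_atLeastAtMost ex])
  then show ?thesis using True by simp
next
  case False
  define T where "T = (n^2 - n) div 2"
  have q0: "real q \<noteq> 0" using q by simp
  have P: "(\<Prod>m\<in>{1..n}. ?f m) = q ^ (\<Sum>m<n. m) * (if j = 1 then 1 else ?f (j - 1))"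
  proof (rule prod_g)
    show "1 \<le> j" "j - 1 \<le> n" using j by auto
    show "?f m = q ^ (m - 1)" if "j \<le> m" for m
    proof -
      have "1 \<le> i" using i by simp
      then have "\<not> i \<le> n + 1 - m" using that False by arith
      then show ?thesis using that by simp
    qed
    show "?f m = q ^ m" if "1 \<le> m" "m + 1 < j" for m using that by auto
  qed
  have PT: "(\<Prod>m\<in>{1..n}. ?f m) = q ^ T * (if j = 1 then 1 else ?f (j - 1))"
    unfolding P T_def sum_lessThan_tri ..
  show ?thesis
  proof (cases "i + j = n + 2")
    case True
    have fj: "(if j = 1 then 1 else ?f (j - 1)) = q ^ (j - 1)"
      using True j by auto
    have "?R = real q * real q powi (int T + int j - 2)"
      using True by (simp add: kdelta_def T_def)
    also have "\<dots> = real q powi (int T + int j - 2 + 1)"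
      using q0 by (rule power_int_add_1'[symmetric, OF disjI1])
    also have "int T + int j - 2 + 1 = int (T + (j - 1))" using j by auto
    also have "real q powi int (T + (j - 1)) = real q ^ (T + (j - 1))" by (rule power_int_of_nat)
    finally show ?thesis using PT fj by (simp add: power_add)
  next
    case False2: False
    then have j2: "j \<ge> 2" using False i j by auto
    have fj: "(if j = 1 then 1 else ?f (j - 1)) = q ^ (j - 1) - q ^ (j - 2)"
      using False False2 j2 j by (auto simp: numeral_2_eq_2)
    have le: "q ^ (j - 2) \<le> q ^ (j - 1)" using q by (intro power_increasing) auto
    have "?R = (real q - 1) * real q powi (int T + int j - 2)"
      using False False2 by (simp add: kdelta_def T_def)
    also have "int T + int j - 2 = int (T + (j - 2))" using j2 by auto
    also have "real q powi int (T + (j - 2)) = real q ^ (T + (j - 2))" by (rule power_int_of_nat)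
    finally have R: "?R = (real q - 1) * real q ^ (T + (j - 2))" .
    have jj: "j - 1 = Suc (j - 2)" using j2 by simp
    have "real (q ^ T * (q ^ (j - 1) - q ^ (j - 2))) = real q ^ T * (real q ^ (j - 1) - real q ^ (j - 2))"
      using le by (simp add: of_nat_diff)
    also have "\<dots> = (real q - 1) * real q ^ (T + (j - 2))"
      unfolding jj by (simp add: power_add algebra_simps)
    finally show ?thesis using PT fj R by simp
  qed
qed

theorem mainTheorem3:
  fixes n :: nat and X :: "('a::{field,finite} ^ 'm) set"
    and c :: "('a ^ 'm) set list" and i j :: nat
  assumes "n \<ge> 1"
    and "CARD('m) = n + 1"
    and "lsub X" and "ldim X = 1"
    and "i \<in> {1..n+1}" and "j \<in> {1..n+1}"
    and "c \<in> max_flags n" and "flag_type X c = i"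
  shows "real (card {d \<in> max_flags n. flag_type X d = j \<and> opposite c d}) =
    (if i + j < n + 2 then 0
     else (real CARD('a) - 1 + real (kdelta (i + j) (n + 2)))
          * real CARD('a) powi (int ((n^2 - n) div 2) + int j - 2))"
proof -
  note cm = assms(2) and iI = assms(5) and jI = assms(6) and c = assms(7)
  have Xs: "vec.subspace X" "vec.dim X = 1" using assms(3,4) by (simp_all add: lsub_eq ldim_eq)
  have Xnz: "\<not> X \<subseteq> {0}"
  proof
    assume "X \<subseteq> {0}"
    then have "vec.dim X = 0" by (rule vec.dim_eq_0[THEN iffD2])
    then show False using Xs(2) by simp
  qed
  define q where "q = CARD('a)"
  have ct: "X \<subseteq> flag_sub c i" "\<not> X \<subseteq> flag_sub c (i - 1)"
    using flag_type_iff[OF c Xnz iI] assms(8) by auto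
  have ctype: "X \<subseteq> flag_sub c m \<longleftrightarrow> i \<le> m" if m: "m \<le> n + 1" for m
  proof
    assume "X \<subseteq> flag_sub c m"
    show "i \<le> m"
    proof (rule ccontr)
      assume "\<not> i \<le> m"
      then have "m \<le> i - 1" "i - 1 \<le> n + 1" using iI by auto
      then have "flag_sub c m \<subseteq> flag_sub c (i - 1)" by (rule fsub_mono[OF c])
      then show False using ct(2) \<open>X \<subseteq> flag_sub c m\<close> by blast
    qed
  next
    assume "i \<le> m"
    then have "flag_sub c i \<subseteq> flag_sub c m" using m by (rule fsub_mono[OF c])
    then show "X \<subseteq> flag_sub c m" using ct(1) by blast
  qed
  define f where "f m = (if j \<le> m then (if i \<le> n + 1 - m then 0 else q ^ (m - 1))
            else if Suc m = j then q ^ m - (if i \<le> n + 1 - m then 0 else q ^ (m - 1)) else q ^ m)" for m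
  have step: "\<forall>m\<in>{1..n}. \<forall>ys\<in>OPP n c (Qj X j) (Suc m).
      card {H \<in> HS n c m (vs ys 0). Qj X j m H} = f m"
  proof (intro ballI)
    fix m ys assume m: "m \<in> {1..n}" and ys: "ys \<in> OPP n c (Qj X j) (Suc m)"
    have m1: "1 \<le> m" and mn: "m \<le> n" using m by auto
    define V where "V = vs ys 0"
    have V: "vec.subspace V" "vec.dim V = m + 1" "V \<inter> flag_sub c (n - m) = {0}"
      and VQ: "ys \<noteq> [] \<longrightarrow> Qj X j (Suc m) V"
      using opp_inv[OF c cm ys mn] unfolding V_def by auto
    have XV: "X \<subseteq> V" if "j \<le> Suc m"
    proof (cases "ys = []")
      case True then show ?thesis unfolding V_def vs_def by simp
    next
      case False then show ?thesis using VQ that unfolding Qj_def by simp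
    qed
    have finHS: "finite (HS n c m V)" by simp
    have c1: "card (HS n c m V) = q ^ m"
      unfolding HS_def q_def by (rule step_count1[OF c cm m1 mn V])
    have c2: "card {H \<in> HS n c m V. X \<subseteq> H} = (if i \<le> n + 1 - m then 0 else q ^ (m - 1))"
      if "j \<le> Suc m"
    proof -
      have "card {H \<in> HS n c m V. X \<subseteq> H} = (if X \<subseteq> flag_sub c (n + 1 - m) then 0 else q ^ (m - 1))"
        unfolding HS_def q_def mem_Collect_eq using step_count2[OF c cm m1 mn V Xs XV[OF that]] by simp
      also have "(X \<subseteq> flag_sub c (n + 1 - m)) = (i \<le> n + 1 - m)" by (rule ctype) simp
      finally show ?thesis .
    qed
    have "card {H \<in> HS n c m V. Qj X j m H} = f m"
    proof (cases "j \<le> m")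
      case True
      have "{H \<in> HS n c m V. Qj X j m H} = {H \<in> HS n c m V. X \<subseteq> H}" using True by (simp add: Qj_def)
      then show ?thesis using c2 True unfolding f_def by simp
    next
      case False
      show ?thesis
      proof (cases "Suc m = j")
        case True
        have "{H \<in> HS n c m V. Qj X j m H} = HS n c m V - {H \<in> HS n c m V. X \<subseteq> H}"
          using True by (auto simp: Qj_def)
        then have "card {H \<in> HS n c m V. Qj X j m H} = card (HS n c m V) - card {H \<in> HS n c m V. X \<subseteq> H}"
          using finHS by (simp add: card_Diff_subset)
        then show ?thesis using c1 c2 True False unfolding f_def by simp
      next
        case False2: False
        have "{H \<in> HS n c m V. Qj X j m H} = HS n c m V" using False False2 by (simp add: Qj_def)
        then show ?thesis using c1 False False2 unfolding f_def by simp
      qed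
    qed
    then show "card {H \<in> HS n c m (vs ys 0). Qj X j m H} = f m" unfolding V_def .
  qed
  have "card (OPP n c (Qj X j) 1) = (\<Prod>m\<in>{1..n}. f m)"
    using opp_card[OF step] assms(1) by simp
  then have "card {d \<in> max_flags n. flag_type X d = j \<and> opposite c d} = (\<Prod>m\<in>{1..n}. f m)"
    unfolding flags_eq[OF c cm Xnz jI] .
  moreover have "q \<ge> 1" unfolding q_def by (simp add: Suc_leI)
  ultimately show ?thesis
    using prod_arith[OF _ iI jI, of q] unfolding f_def q_def by simp
qed

end
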